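(* (Working in $\mathbf{ZF}$.) Let $X$ and $Y$ be weakly normal generalized topological spaces such that the Wallman spaces $\mathcal W(X,\mathrm{Cl}_X)$ and $\mathcal W(Y,\mathrm{Cl}_Y)$ are compact. Then a mapping $f:X\to Y$ has a weakly continuous Wallman extension if and only if $f$ is w-continuous.
   Context: A generalized topological space (gts) $(X,\mathrm{Op}_X,\mathrm{Cov}_X)$ is in the sense of Delfs–Knebusch ($\mathrm{Op}_X$ contains $\emptyset,X$, closed under finite unions and intersections; $\mathrm{Cov}_X$ a collection of families of open sets satisfying the Delfs–Knebusch axioms). $\mathrm{Cl}_X$ = complements of open sets. $X$ is weakly normal if any two disjoint sets, each a singleton or in $\mathrm{Cl}_X$, lie in disjoint open sets. $\mathcal W(X,\mathrm{Cl}_X)$ is the set of ultrafilters (maximal filters) in $\mathrm{Cl}_X$ with the topology whose closed base is $\{[A]:A\in\mathrm{Cl}_X\}$, $[A]=\{p:A\in p\}$; $w_X(x)=\{A\in\mathrm{Cl}_X:x\in A\}$ (and $x$ is identified with $w_X(x)$). A Wallman extension of $f:X\to Y$ is a mapping $\hat f:\mathcal W(X,\mathrm{Cl}_X)\to\mathcal W(Y,\mathrm{Cl}_Y)$ with $\hat f(w_X(x))=w_Y(f(x))$ for all $x\in X$; it is weakly continuous if it is continuous with respect to the Wallman space topologies. For families $\mathcal U,\mathcal V$, $\mathcal U\preceq\mathcal V$ means every member of $\mathcal U$ lies in a member of $\mathcal V$ and $\bigcup\mathcal U=\bigcup\mathcal V$; $f^{-1}(\mathcal V)=\{f^{-1}(V):V\in\mathcal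 V\}$. $f$ is w-continuous if for every finite (equivalently, essentially finite) family $\mathcal V\subseteq\mathrm{Op}_Y$ covering $Y$ there is a finite (essentially finite) family $\mathcal U\subseteq\mathrm{Op}_X$ covering $X$ with $\mathcal U\preceq f^{-1}(\mathcal V)$. *)

theory Defs
  imports "HOL-Analysis.Analysis"
begin

text \<open>Generalized topological spaces (Delfs--Knebusch / Piekosz--Wajch axioms).
  A gts is a triple (X, Op, Cov) with Op a family of subsets of X and Cov a family
  of subfamilies of Op.\<close>

definition gts :: "'a set \<Rightarrow> 'a set set \<Rightarrow> 'a set set set \<Rightarrow> bool" where
  "gts X Op Cov \<longleftrightarrow>
     Op \<subseteq> Pow X \<and> Cov \<subseteq> Pow Op \<and>
     {} \<in> Op \<and> X \<in> Op \<and>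
     (\<forall>U\<in>Op. \<forall>V\<in>Op. U \<union> V \<in> Op \<and> U \<inter> V \<in> Op) \<and>
     (\<forall>\<U>. finite \<U> \<and> \<U> \<subseteq> Op \<longrightarrow> \<U> \<in> Cov) \<and>
     (\<forall>\<U>\<in>Cov. \<forall>V\<in>Op. (\<lambda>U. U \<inter> V) ` \<U> \<in> Cov) \<and>
     (\<forall>\<U>\<in>Cov. \<forall>\<V>. (\<forall>U\<in>\<U>. \<V> U \<in> Cov \<and> \<Union>(\<V> U) = U) \<longrightarrow> (\<Union>U\<in>\<U>. \<V> U) \<in> Cov) \<and>
     (\<forall>\<U>\<in>Cov. \<forall>\<V>. \<V> \<subseteq> Op \<and> \<Union>\<V> = \<Union>\<U> \<and> (\<forall>U\<in>\<U>. (\<lambda>V. V \<inter> U) ` \<V> \<in> Cov)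
          \<longrightarrow> \<V> \<in> Cov) \<and>
     (\<forall>\<U>\<in>Cov. \<forall>V. V \<subseteq> \<Union>\<U> \<and> (\<forall>U\<in>\<U>. V \<inter> U \<in> Op) \<longrightarrow> V \<in> Op)"

definition Cl :: "'a set \<Rightarrow> 'a set set \<Rightarrow> 'a set set" where
  "Cl X Op = {X - U | U. U \<in> Op}"

definition weakly_normal :: "'a set \<Rightarrow> 'a set set \<Rightarrow> bool" where
  "weakly_normal X Op \<longleftrightarrow>
     (\<forall>A B. ((\<exists>x\<in>X. A = {x}) \<or> A \<in> Cl X Op) \<and> ((\<exists>x\<in>X. B = {x}) \<or> B \<in> Cl X Op) \<and>
            A \<inter> B = {} \<longrightarrow> (\<exists>U\<in>Op. \<exists>V\<in>Op. A \<subseteq> U \<and> B \<subseteq> V \<and> U \<inter> V = {}))"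

definition filter_in :: "'a set set \<Rightarrow> 'a set set \<Rightarrow> bool" where
  "filter_in L p \<longleftrightarrow> p \<subseteq> L \<and> p \<noteq> {} \<and> {} \<notin> p \<and>
     (\<forall>A\<in>p. \<forall>B\<in>p. A \<inter> B \<in> p) \<and> (\<forall>A\<in>p. \<forall>B\<in>L. A \<subseteq> B \<longrightarrow> B \<in> p)"

definition ultrafilter_in :: "'a set set \<Rightarrow> 'a set set \<Rightarrow> bool" where
  "ultrafilter_in L p \<longleftrightarrow> filter_in L p \<and> (\<forall>q. filter_in L q \<and> p \<subseteq> q \<longrightarrow> q = p)"

definition wallman_points :: "'a set \<Rightarrow> 'a set set \<Rightarrow> 'a set set set" where
  "wallman_points X Op = {p. ultrafilter_in (Cl X Op) p}"

definition wallman_bracket :: "'a set \<Rightarrow> 'a set set \<Rightarrow> 'a set \<Rightarrow> 'a set set set" where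
  "wallman_bracket X Op A = {p \<in> wallman_points X Op. A \<in> p}"

definition wallman_topology :: "'a set \<Rightarrow> 'a set set \<Rightarrow> 'a set set topology" where
  "wallman_topology X Op =
     topology_generated_by {wallman_points X Op - wallman_bracket X Op A | A. A \<in> Cl X Op}"

definition w_map :: "'a set \<Rightarrow> 'a set set \<Rightarrow> 'a \<Rightarrow> 'a set set" where
  "w_map X Op x = {A \<in> Cl X Op. x \<in> A}"

definition wallman_extension ::
  "'a set \<Rightarrow> 'a set set \<Rightarrow> 'b set \<Rightarrow> 'b set set \<Rightarrow> ('a \<Rightarrow> 'b) \<Rightarrow> ('a set set \<Rightarrow> 'b set set) \<Rightarrow> bool" where
  "wallman_extension X OpX Y OpY f F \<longleftrightarrow>
     (\<forall>p\<in>wallman_points X OpX. F p \<in> wallman_points Y OpY) \<and>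
     (\<forall>x\<in>X. F (w_map X OpX x) = w_map Y OpY (f x))"

definition weakly_continuous_wallman_extension ::
  "'a set \<Rightarrow> 'a set set \<Rightarrow> 'b set \<Rightarrow> 'b set set \<Rightarrow> ('a \<Rightarrow> 'b) \<Rightarrow> ('a set set \<Rightarrow> 'b set set) \<Rightarrow> bool" where
  "weakly_continuous_wallman_extension X OpX Y OpY f F \<longleftrightarrow>
     wallman_extension X OpX Y OpY f F \<and>
     continuous_map (wallman_topology X OpX) (wallman_topology Y OpY) F"

definition fam_refines :: "'a set set \<Rightarrow> 'a set set \<Rightarrow> bool" where
  "fam_refines \<U> \<V> \<longleftrightarrow> (\<forall>U\<in>\<U>. \<exists>V\<in>\<V>. U \<subseteq> V) \<and> \<Union>\<U> = \<Union>\<V>"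

definition w_continuous ::
  "'a set \<Rightarrow> 'a set set \<Rightarrow> 'b set \<Rightarrow> 'b set set \<Rightarrow> ('a \<Rightarrow> 'b) \<Rightarrow> bool" where
  "w_continuous X OpX Y OpY f \<longleftrightarrow>
     (\<forall>\<V>. finite \<V> \<and> \<V> \<subseteq> OpY \<and> \<Union>\<V> = Y \<longrightarrow>
        (\<exists>\<U>. finite \<U> \<and> \<U> \<subseteq> OpX \<and> \<Union>\<U> = X \<and>
              fam_refines \<U> ((\<lambda>V. {x \<in> X. f x \<in> V}) ` \<V>)))"

end

theory Submission
  imports Defs
begin


lemma gts_Op: assumes "gts X Op Cov"
  shows "Op \<subseteq> Pow X" "{} \<in> Op" "X \<in> Op" "U \<in> Op \<Longrightarrow> V \<in> Op \<Longrightarrow> U \<union> V \<in> Op"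
    "U \<in> Op \<Longrightarrow> V \<in> Op \<Longrightarrow> U \<inter> V \<in> Op"
proof -
  have h: "Op \<subseteq> Pow X" "{} \<in> Op" "X \<in> Op" "\<forall>U\<in>Op. \<forall>V\<in>Op. U \<union> V \<in> Op \<and> U \<inter> V \<in> Op"
    using assms unfolding gts_def by simp_all
  show "Op \<subseteq> Pow X" "{} \<in> Op" "X \<in> Op" using h by simp_all
  show "U \<in> Op \<Longrightarrow> V \<in> Op \<Longrightarrow> U \<union> V \<in> Op" "U \<in> Op \<Longrightarrow> V \<in> Op \<Longrightarrow> U \<inter> V \<in> Op"
    using h(4) by blast+
qed

lemma Cl_iff: assumes "gts X Op Cov"
  shows "A \<in> Cl X Op \<longleftrightarrow> A \<subseteq> X \<and> X - A \<in> Op"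
proof
  assume "A \<in> Cl X Op"
  then obtain U where "U \<in> Op" "A = X - U" unfolding Cl_def by blast
  moreover have "U \<subseteq> X" using gts_Op(1)[OF assms] \<open>U \<in> Op\<close> by blast
  ultimately show "A \<subseteq> X \<and> X - A \<in> Op" by (simp add: Diff_Diff_Int inf.absorb2)
next
  assume "A \<subseteq> X \<and> X - A \<in> Op"
  then show "A \<in> Cl X Op" unfolding Cl_def by (intro CollectI exI[of _ "X - A"]) auto
qed

lemma Cl_props: assumes "gts X Op Cov"
  shows "{} \<in> Cl X Op" "X \<in> Cl X Op" "U \<in> Op \<Longrightarrow> X - U \<in> Cl X Op"
    "A \<in> Cl X Op \<Longrightarrow> B \<in> Cl X Op \<Longrightarrow> A \<inter> B \<in> Cl X Op"
    "A \<in> Cl X Op \<Longrightarrow> B \<in> Cl X Op \<Longrightarrow> A \<union> B \<in> Cl X Op"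
    "A \<in> Cl X Op \<Longrightarrow> A \<subseteq> X"
proof -
  note G = gts_Op[OF assms] Cl_iff[OF assms]
  show "{} \<in> Cl X Op" "X \<in> Cl X Op" using G by auto
  show "U \<in> Op \<Longrightarrow> X - U \<in> Cl X Op" unfolding Cl_def by blast
  show "A \<in> Cl X Op \<Longrightarrow> B \<in> Cl X Op \<Longrightarrow> A \<inter> B \<in> Cl X Op"
  proof -
    assume a: "A \<in> Cl X Op" "B \<in> Cl X Op"
    have "X - (A \<inter> B) = (X - A) \<union> (X - B)" by auto
    then show ?thesis using a G by auto
  qed
  show "A \<in> Cl X Op \<Longrightarrow> B \<in> Cl X Op \<Longrightarrow> A \<union> B \<in> Cl X Op"
  proof -
    assume a: "A \<in> Cl X Op" "B \<in> Cl X Op"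
    have "X - (A \<union> B) = (X - A) \<inter> (X - B)" by auto
    then show ?thesis using a G by auto
  qed
  show "A \<in> Cl X Op \<Longrightarrow> A \<subseteq> X" using G by auto
qed

lemma Op_Union: assumes "gts X Op Cov" "finite \<U>" "\<U> \<subseteq> Op" shows "\<Union>\<U> \<in> Op"
  using assms(2,3)
proof (induction rule: finite_induct)
  case empty then show ?case using gts_Op(2)[OF assms(1)] by simp
next
  case (insert U F) then show ?case using gts_Op(4)[OF assms(1), of U "\<Union>F"] by simp
qed

lemma uf_filter: "ultrafilter_in L p \<Longrightarrow> filter_in L p" unfolding ultrafilter_in_def by blast

lemma fD: assumes "filter_in L p"
  shows "p \<subseteq> L" "{} \<notin> p" "\<exists>A. A \<in> p" "A \<in> p \<Longrightarrow> B \<in> p \<Longrightarrow> A \<inter> B \<in> p"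
    "A \<in> p \<Longrightarrow> B \<in> L \<Longrightarrow> A \<subseteq> B \<Longrightarrow> B \<in> p"
  using assms unfolding filter_in_def by auto

lemma uf_disj:
  assumes "ultrafilter_in L p" "A \<in> L" "A \<notin> p" "\<And>C D. C \<in> L \<Longrightarrow> D \<in> L \<Longrightarrow> C \<inter> D \<in> L"
  shows "\<exists>C\<in>p. C \<inter> A = {}"
proof (rule ccontr)
  assume H: "\<not> (\<exists>C\<in>p. C \<inter> A = {})"
  define q where "q = {D \<in> L. \<exists>C\<in>p. C \<inter> A \<subseteq> D}"
  have fp: "filter_in L p" using assms(1) uf_filter by blast
  then obtain C0 where C0: "C0 \<in> p" using fD(3) by blast
  have pL: "p \<subseteq> L" using fD(1)[OF fp] .
  have "filter_in L q" unfolding filter_in_def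
  proof (intro conjI ballI impI)
    show "q \<subseteq> L" unfolding q_def by blast
    show "q \<noteq> {}" using C0 pL unfolding q_def by blast
    show "{} \<notin> q" using H unfolding q_def by blast
  next
    fix D E assume "D \<in> q" "E \<in> q"
    then obtain C1 C2 where "C1 \<in> p" "C2 \<in> p" "C1 \<inter> A \<subseteq> D" "C2 \<inter> A \<subseteq> E" "D \<in> L" "E \<in> L"
      unfolding q_def by blast
    moreover have "C1 \<inter> C2 \<in> p" using fD(4)[OF fp \<open>C1 \<in> p\<close> \<open>C2 \<in> p\<close>] .
    ultimately show "D \<inter> E \<in> q" unfolding q_def using assms(4) by blast
  next
    fix D E assume "D \<in> q" "E \<in> L" "D \<subseteq> E"
    then show "E \<in> q" unfolding q_def by blast
  qed
  moreover have "p \<subseteq> q" using pL unfolding q_def by blast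
  ultimately have "q = p" using assms(1) unfolding ultrafilter_in_def by blast
  moreover have "A \<in> q" using C0 assms(2) unfolding q_def by blast
  ultimately show False using assms(3) by blast
qed

lemma filter_Inter:
  assumes "filter_in L p" "finite F" "F \<noteq> {}" "F \<subseteq> p" shows "\<Inter>F \<in> p"
  using assms(2,3,4)
proof (induction rule: finite_ne_induct)
  case (singleton x) then show ?case by simp
next
  case (insert x F) then show ?case using fD(4)[OF assms(1)] by auto
qed

lemma uf_X: assumes "gts X Op Cov" "ultrafilter_in (Cl X Op) p" shows "X \<in> p"
proof -
  have f: "filter_in (Cl X Op) p" using assms uf_filter by blast
  then obtain A where "A \<in> p" using fD(3) by blast
  then have "A \<in> Cl X Op" using fD(1)[OF f] by blast
  then show ?thesis using fD(5)[OF f \<open>A \<in> p\<close>] Cl_props(2,6)[OF assms(1)] by blast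
qed

lemma uf_prime: assumes "gts X Op Cov" "ultrafilter_in (Cl X Op) p"
  "A \<in> Cl X Op" "B \<in> Cl X Op" "A \<union> B \<in> p" shows "A \<in> p \<or> B \<in> p"
proof (rule ccontr)
  assume "\<not> (A \<in> p \<or> B \<in> p)"
  then obtain C D where "C \<in> p" "D \<in> p" "C \<inter> A = {}" "D \<inter> B = {}"
    using uf_disj[OF assms(2)] assms(3,4) Cl_props[OF assms(1)] by metis
  moreover have f: "filter_in (Cl X Op) p" using assms uf_filter by blast
  ultimately have "C \<inter> D \<in> p" using fD(4) by blast
  then have "C \<inter> D \<inter> (A \<union> B) \<in> p" using assms(5) fD(4)[OF f] by blast
  moreover have "C \<inter> D \<inter> (A \<union> B) = {}" using \<open>C \<inter> A = {}\<close> \<open>D \<inter> B = {}\<close> by blast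
  ultimately show False using fD(2)[OF f] by auto
qed

lemma w_map_uf: assumes "gts X Op Cov" "weakly_normal X Op" "x \<in> X"
  shows "w_map X Op x \<in> wallman_points X Op"
proof -
  note C = Cl_props[OF assms(1)]
  have f: "filter_in (Cl X Op) (w_map X Op x)"
    unfolding filter_in_def
  proof (intro conjI ballI impI)
    show "w_map X Op x \<subseteq> Cl X Op" unfolding w_map_def by blast
    show "w_map X Op x \<noteq> {}" using C(2) assms(3) unfolding w_map_def by blast
    show "{} \<notin> w_map X Op x" unfolding w_map_def by blast
  next
    fix A B assume "A \<in> w_map X Op x" "B \<in> w_map X Op x"
    then show "A \<inter> B \<in> w_map X Op x" using C(4) unfolding w_map_def by blast
  next
    fix A B assume "A \<in> w_map X Op x" "B \<in> Cl X Op" "A \<subseteq> B"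
    then show "B \<in> w_map X Op x" unfolding w_map_def by blast
  qed
  moreover have "q = w_map X Op x" if q1: "filter_in (Cl X Op) q" and q2: "w_map X Op x \<subseteq> q" for q
  proof
    show "q \<subseteq> w_map X Op x"
    proof
      fix A assume A: "A \<in> q"
      then have AC: "A \<in> Cl X Op" using fD(1)[OF q1] by blast
      show "A \<in> w_map X Op x"
      proof (rule ccontr)
        assume "A \<notin> w_map X Op x"
        then have xA: "x \<notin> A" using AC unfolding w_map_def by blast
        have "((\<exists>y\<in>X. {x} = {y}) \<or> {x} \<in> Cl X Op) \<and> ((\<exists>y\<in>X. A = {y}) \<or> A \<in> Cl X Op) \<and> {x} \<inter> A = {}"
          using assms(3) AC xA by blast
        from assms(2)[unfolded weakly_normal_def, rule_format, OF this]
        obtain U V where UV: "U \<in> Op" "V \<in> Op" "{x} \<subseteq> U" "A \<subseteq> V" "U \<inter> V = {}"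
          by blast
        have "X - V \<in> w_map X Op x" using C(3)[OF UV(2)] UV assms(3) unfolding w_map_def by blast
        then have "X - V \<in> q" using q2 by blast
        then have "A \<inter> (X - V) \<in> q" using A fD(4)[OF q1] by blast
        moreover have "A \<inter> (X - V) = {}" using UV by blast
        ultimately show False using fD(2)[OF q1] by auto
      qed
    qed
  qed (use q2 in blast)
  ultimately show ?thesis unfolding wallman_points_def ultrafilter_in_def by blast
qed

lemma wn_cl: assumes "weakly_normal X Op" "A \<in> Cl X Op" "B \<in> Cl X Op" "A \<inter> B = {}"
  shows "\<exists>U\<in>Op. \<exists>V\<in>Op. A \<subseteq> U \<and> B \<subseteq> V \<and> U \<inter> V = {}"
proof -
  have "((\<exists>y\<in>X. A = {y}) \<or> A \<in> Cl X Op) \<and> ((\<exists>y\<in>X. B = {y}) \<or> B \<in> Cl X Op) \<and> A \<inter> B = {}"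
    using assms by blast
  from assms(1)[unfolded weakly_normal_def, rule_format, OF this] show ?thesis .
qed

lemma topspace_WT: assumes "gts X Op Cov"
  shows "topspace (wallman_topology X Op) = wallman_points X Op"
proof -
  have "wallman_bracket X Op {} = {}"
    unfolding wallman_bracket_def wallman_points_def ultrafilter_in_def filter_in_def by blast
  then have "wallman_points X Op \<in> {wallman_points X Op - wallman_bracket X Op A | A. A \<in> Cl X Op}"
    using Cl_props(1)[OF assms] by auto
  then show ?thesis unfolding wallman_topology_def topology_generated_by_topspace
    unfolding wallman_bracket_def by blast
qed

lemma open_WT: "A \<in> Cl X Op \<Longrightarrow> openin (wallman_topology X Op) (wallman_points X Op - wallman_bracket X Op A)"
  unfolding wallman_topology_def by (rule topology_generated_by_Basis) blast

lemma open_WT_basis: assumes "gts X Op Cov" "openin (wallman_topology X Op) S" "p \<in> S"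
  shows "\<exists>A\<in>Cl X Op. A \<notin> p \<and> (\<forall>p'\<in>wallman_points X Op. A \<notin> p' \<longrightarrow> p' \<in> S)"
proof -
  have S: "p \<in> wallman_points X Op"
    using openin_subset[OF assms(2)] assms(3) topspace_WT[OF assms(1)] by blast
  have g: "generate_topology_on {wallman_points X Op - wallman_bracket X Op A | A. A \<in> Cl X Op} S"
    using assms(2) unfolding wallman_topology_def openin_topology_generated_by_iff .
  have "\<forall>p\<in>S. p \<in> wallman_points X Op \<longrightarrow> (\<exists>A\<in>Cl X Op. A \<notin> p \<and> (\<forall>p'\<in>wallman_points X Op. A \<notin> p' \<longrightarrow> p' \<in> S))"
    using g
  proof (induction rule: generate_topology_on.induct)
    case Empty then show ?case by blast
  next
    case (Int a b)
    show ?case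
    proof (intro ballI impI)
      fix p assume "p \<in> a \<inter> b" "p \<in> wallman_points X Op"
      then obtain A B where A: "A\<in>Cl X Op" "A \<notin> p" "\<forall>p'\<in>wallman_points X Op. A \<notin> p' \<longrightarrow> p' \<in> a"
        and B: "B\<in>Cl X Op" "B \<notin> p" "\<forall>p'\<in>wallman_points X Op. B \<notin> p' \<longrightarrow> p' \<in> b"
        using Int.IH by blast
      have "A \<union> B \<notin> p" using uf_prime[OF assms(1) _ A(1) B(1)] A(2) B(2) \<open>p \<in> wallman_points X Op\<close>
        unfolding wallman_points_def by blast
      moreover have "p' \<in> a \<inter> b" if "p' \<in> wallman_points X Op" "A \<union> B \<notin> p'" for p'
      proof -
        have "filter_in (Cl X Op) p'" using that uf_filter unfolding wallman_points_def by blast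
        then have "A \<notin> p'" "B \<notin> p'" using that(2) fD(5) Cl_props(5)[OF assms(1) A(1) B(1)]
          by blast+
        then show ?thesis using A B that(1) by blast
      qed
      ultimately show "\<exists>C\<in>Cl X Op. C \<notin> p \<and> (\<forall>p'\<in>wallman_points X Op. C \<notin> p' \<longrightarrow> p' \<in> a \<inter> b)"
        using Cl_props(5)[OF assms(1) A(1) B(1)] by blast
    qed
  next
    case (UN K)
    show ?case
    proof (intro ballI impI)
      fix p assume "p \<in> \<Union>K" "p \<in> wallman_points X Op"
      then obtain k where k: "k \<in> K" "p \<in> k" by blast
      then obtain A where "A\<in>Cl X Op" "A \<notin> p" "\<forall>p'\<in>wallman_points X Op. A \<notin> p' \<longrightarrow> p' \<in> k"
        using UN.IH \<open>p \<in> wallman_points X Op\<close> by blast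
      then show "\<exists>A\<in>Cl X Op. A \<notin> p \<and> (\<forall>p'\<in>wallman_points X Op. A \<notin> p' \<longrightarrow> p' \<in> \<Union>K)"
        using k by blast
    qed
  next
    case (Basis s)
    then obtain A where A: "A \<in> Cl X Op" "s = wallman_points X Op - wallman_bracket X Op A" by blast
    show ?case
    proof (intro ballI impI)
      fix p assume "p \<in> s" "p \<in> wallman_points X Op"
      then have "A \<notin> p" using A unfolding wallman_bracket_def by blast
      moreover have "\<forall>p'\<in>wallman_points X Op. A \<notin> p' \<longrightarrow> p' \<in> s" using A unfolding wallman_bracket_def by blast
      ultimately show "\<exists>A\<in>Cl X Op. A \<notin> p \<and> (\<forall>p'\<in>wallman_points X Op. A \<notin> p' \<longrightarrow> p' \<in> s)"
        using A(1) by blast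
    qed
  qed
  then show ?thesis using S assms(3) by blast
qed



lemma nec:
  assumes gX: "gts X OpX CovX" and gY: "gts Y OpY CovY"
    and nX: "weakly_normal X OpX" and nY: "weakly_normal Y OpY"
    and cX: "compact_space (wallman_topology X OpX)"
    and fXY: "\<forall>x\<in>X. f x \<in> Y"
    and F: "weakly_continuous_wallman_extension X OpX Y OpY f F"
  shows "w_continuous X OpX Y OpY f"
  unfolding w_continuous_def
proof (intro allI impI)
  fix \<V> assume V: "finite \<V> \<and> \<V> \<subseteq> OpY \<and> \<Union>\<V> = Y"
  let ?WX = "wallman_points X OpX" and ?WY = "wallman_points Y OpY"
  have ext: "\<forall>p\<in>?WX. F p \<in> ?WY" "\<forall>x\<in>X. F (w_map X OpX x) = w_map Y OpY (f x)"
    and cont: "continuous_map (wallman_topology X OpX) (wallman_topology Y OpY) F"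
    using F unfolding weakly_continuous_wallman_extension_def wallman_extension_def by blast+
  define S where "S = {A \<in> Cl X OpX. \<exists>V\<in>\<V>. \<forall>p\<in>?WX. A \<notin> p \<longrightarrow> Y - V \<notin> F p}"
  have cover: "?WX \<subseteq> \<Union>((\<lambda>A. ?WX - wallman_bracket X OpX A) ` S)"
  proof
    fix p assume p: "p \<in> ?WX"
    have q: "F p \<in> ?WY" using p ext by blast
    then have uq: "ultrafilter_in (Cl Y OpY) (F p)" unfolding wallman_points_def by blast
    have fq: "filter_in (Cl Y OpY) (F p)" using uq uf_filter by blast
    have "\<exists>V\<in>\<V>. Y - V \<notin> F p"
    proof (rule ccontr)
      assume H: "\<not> (\<exists>V\<in>\<V>. Y - V \<notin> F p)"
      have YF: "Y \<in> F p" using uf_X[OF gY uq] .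
      show False
      proof (cases "\<V> = {}")
        case True
        then have "Y = {}" using V by auto
        then show False using YF fq unfolding filter_in_def by auto
      next
        case False
        have "\<Inter>((\<lambda>V. Y - V) ` \<V>) \<in> F p"
          using filter_Inter[OF fq] V False H by blast
        moreover have "\<Inter>((\<lambda>V. Y - V) ` \<V>) = {}" using V False by blast
        ultimately show False using fq unfolding filter_in_def by auto
      qed
    qed
    then obtain V where Vin: "V \<in> \<V>" and YV: "Y - V \<notin> F p" by blast
    have VC: "Y - V \<in> Cl Y OpY" using Cl_props(3)[OF gY] V Vin by blast
    have "openin (wallman_topology X OpX) {x \<in> topspace (wallman_topology X OpX). F x \<in> ?WY - wallman_bracket Y OpY (Y - V)}"
      using cont open_WT[OF VC] unfolding continuous_map_def by blast
    then have op: "openin (wallman_topology X OpX) {x \<in> ?WX. F x \<in> ?WY - wallman_bracket Y OpY (Y - V)}"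
      using topspace_WT[OF gX] by simp
    have "p \<in> {x \<in> ?WX. F x \<in> ?WY - wallman_bracket Y OpY (Y - V)}"
      using p q YV unfolding wallman_bracket_def by blast
    from open_WT_basis[OF gX op this] obtain A where A: "A \<in> Cl X OpX" "A \<notin> p"
      "\<forall>p'\<in>?WX. A \<notin> p' \<longrightarrow> p' \<in> {x \<in> ?WX. F x \<in> ?WY - wallman_bracket Y OpY (Y - V)}" by blast
    have "A \<in> S" unfolding S_def using A Vin unfolding wallman_bracket_def by blast
    moreover have "p \<in> ?WX - wallman_bracket X OpX A" using p A unfolding wallman_bracket_def by blast
    ultimately show "p \<in> \<Union>((\<lambda>A. ?WX - wallman_bracket X OpX A) ` S)" by blast
  qed
  have "\<exists>\<F>. finite \<F> \<and> \<F> \<subseteq> (\<lambda>A. ?WX - wallman_bracket X OpX A) ` S \<and> topspace (wallman_topology X OpX) \<subseteq> \<Union>\<F>"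
    using cX[unfolded compact_space_alt] cover topspace_WT[OF gX] open_WT S_def
    by (smt (verit, ccfv_threshold) imageE mem_Collect_eq)
  then obtain \<F> where Ff: "finite \<F>" "\<F> \<subseteq> (\<lambda>A. ?WX - wallman_bracket X OpX A) ` S" "?WX \<subseteq> \<Union>\<F>"
    using topspace_WT[OF gX] by auto
  then obtain B where B: "B \<subseteq> S" "finite B" "\<F> = (\<lambda>A. ?WX - wallman_bracket X OpX A) ` B"
    by (meson finite_subset_image)
  define \<U> where "\<U> = (\<lambda>A. X - A) ` B"
  have BC: "B \<subseteq> Cl X OpX" using B S_def by blast
  have xcov: "\<exists>A\<in>B. x \<notin> A" if "x \<in> X" for x
  proof -
    have "w_map X OpX x \<in> ?WX" using w_map_uf[OF gX nX that] .
    then obtain A where "A \<in> B" "w_map X OpX x \<notin> wallman_bracket X OpX A" using Ff B by blast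
    then have "A \<notin> w_map X OpX x" using \<open>w_map X OpX x \<in> ?WX\<close> unfolding wallman_bracket_def by blast
    then show ?thesis using \<open>A \<in> B\<close> BC unfolding w_map_def by blast
  qed
  have fin: "finite \<U>" using B \<U>_def by blast
  moreover have sub: "\<U> \<subseteq> OpX" using BC Cl_iff[OF gX] \<U>_def by blast
  moreover have un: "\<Union>\<U> = X" using xcov \<U>_def by blast
  moreover have "fam_refines \<U> ((\<lambda>V. {x \<in> X. f x \<in> V}) ` \<V>)"
    unfolding fam_refines_def
  proof (intro conjI ballI)
    fix U assume "U \<in> \<U>"
    then obtain A where A: "A \<in> B" "U = X - A" using \<U>_def by blast
    then obtain V where Vin: "V \<in> \<V>" and HV: "\<forall>p\<in>?WX. A \<notin> p \<longrightarrow> Y - V \<notin> F p"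
      using B S_def by blast
    have VC: "Y - V \<in> Cl Y OpY" using Cl_props(3)[OF gY] V Vin by blast
    have "U \<subseteq> {x \<in> X. f x \<in> V}"
    proof
      fix x assume "x \<in> U"
      then have x: "x \<in> X" "x \<notin> A" using A by auto
      have "A \<notin> w_map X OpX x" using x unfolding w_map_def by blast
      then have "Y - V \<notin> F (w_map X OpX x)" using HV w_map_uf[OF gX nX x(1)] by blast
      then have "Y - V \<notin> w_map Y OpY (f x)" using ext x by simp
      then have "f x \<in> V" using VC fXY x unfolding w_map_def by blast
      then show "x \<in> {x \<in> X. f x \<in> V}" using x by blast
    qed
    then show "\<exists>W\<in>(\<lambda>V. {x \<in> X. f x \<in> V}) ` \<V>. U \<subseteq> W" using Vin by blast
  next
    show "\<Union>\<U> = \<Union>((\<lambda>V. {x \<in> X. f x \<in> V}) ` \<V>)" using un V fXY by auto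
  qed
  ultimately show "\<exists>\<U>. finite \<U> \<and> \<U> \<subseteq> OpX \<and> \<Union>\<U> = X \<and> fam_refines \<U> ((\<lambda>V. {x \<in> X. f x \<in> V}) ` \<V>)"
    by blast
qed



definition tr :: "'a set \<Rightarrow> 'b set \<Rightarrow> 'b set set \<Rightarrow> ('a \<Rightarrow> 'b) \<Rightarrow> 'a set set \<Rightarrow> 'b set set" where
  "tr X Y OpY f p = {B \<in> Cl Y OpY. \<exists>A\<in>p. f ` A \<subseteq> B}"

locale suffctx =
  fixes X :: "'a set" and OpX CovX and Y :: "'b set" and OpY CovY and f :: "'a \<Rightarrow> 'b"
  assumes gX: "gts X OpX CovX" and gY: "gts Y OpY CovY"
    and nX: "weakly_normal X OpX" and nY: "weakly_normal Y OpY"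
    and cY: "compact_space (wallman_topology Y OpY)"
    and fXY: "\<forall>x\<in>X. f x \<in> Y"
    and wc: "w_continuous X OpX Y OpY f"
begin

lemma wnY: "A \<in> Cl Y OpY \<Longrightarrow> B \<in> Cl Y OpY \<Longrightarrow> A \<inter> B = {} \<Longrightarrow>
   \<exists>U\<in>OpY. \<exists>V\<in>OpY. A \<subseteq> U \<and> B \<subseteq> V \<and> U \<inter> V = {}"
  using wn_cl[OF nY] by blast

abbreviation "WX \<equiv> wallman_points X OpX"
abbreviation "WY \<equiv> wallman_points Y OpY"
abbreviation "t \<equiv> tr X Y OpY f"

lemma pfacts: assumes "p \<in> WX"
  shows "filter_in (Cl X OpX) p" "ultrafilter_in (Cl X OpX) p" "X \<in> p" "{} \<notin> p"
    "\<And>A. A \<in> p \<Longrightarrow> A \<subseteq> X"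
proof -
  show u: "ultrafilter_in (Cl X OpX) p" using assms unfolding wallman_points_def by blast
  show f: "filter_in (Cl X OpX) p" using uf_filter[OF u] .
  show "X \<in> p" using uf_X[OF gX u] .
  show "{} \<notin> p" using fD(2)[OF f] .
  show "\<And>A. A \<in> p \<Longrightarrow> A \<subseteq> X" using fD(1)[OF f] Cl_props(6)[OF gX] by blast
qed

lemma KEY: assumes p: "p \<in> WX" and V: "finite \<V>" "\<V> \<subseteq> OpY" "\<Union>\<V> = Y"
  shows "\<exists>C\<in>p. \<exists>V\<in>\<V>. f ` C \<subseteq> V"
proof -
  obtain \<U> where U: "finite \<U>" "\<U> \<subseteq> OpX" "\<Union>\<U> = X" "fam_refines \<U> ((\<lambda>V. {x \<in> X. f x \<in> V}) ` \<V>)"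
    using wc V unfolding w_continuous_def by blast
  have "\<exists>U\<in>\<U>. X - U \<notin> p"
  proof (rule ccontr)
    assume H: "\<not> (\<exists>U\<in>\<U>. X - U \<notin> p)"
    show False
    proof (cases "\<U> = {}")
      case True then show False using U pfacts[OF p] by auto
    next
      case False
      have "\<Inter>((\<lambda>U. X - U) ` \<U>) \<in> p" using filter_Inter[OF pfacts(1)[OF p]] U False H by blast
      moreover have "\<Inter>((\<lambda>U. X - U) ` \<U>) = {}" using U False by blast
      ultimately show False using pfacts[OF p] by auto
    qed
  qed
  then obtain U where Uin: "U \<in> \<U>" "X - U \<notin> p" by blast
  have "X - U \<in> Cl X OpX" using Cl_props(3)[OF gX] U Uin by blast
  then obtain C where C: "C \<in> p" "C \<inter> (X - U) = {}"
    using uf_disj[OF pfacts(2)[OF p]] Uin Cl_props(4)[OF gX] by metis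
  then have "C \<subseteq> U" using pfacts(5)[OF p] by blast
  moreover obtain V where "V \<in> \<V>" "U \<subseteq> {x \<in> X. f x \<in> V}" using U(4) Uin unfolding fam_refines_def by blast
  ultimately show ?thesis using C by blast
qed

lemma t_sub: "t p \<subseteq> Cl Y OpY" unfolding tr_def by blast

lemma t_Y: assumes "p \<in> WX" shows "Y \<in> t p"
  unfolding tr_def using pfacts[OF assms] fXY Cl_props(2)[OF gY] by blast

lemma t_Int: assumes "p \<in> WX" "K1 \<in> t p" "K2 \<in> t p" shows "K1 \<inter> K2 \<in> t p"
proof -
  obtain A1 A2 where "A1 \<in> p" "A2 \<in> p" "f ` A1 \<subseteq> K1" "f ` A2 \<subseteq> K2"
    "K1 \<in> Cl Y OpY" "K2 \<in> Cl Y OpY" using assms unfolding tr_def by blast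
  moreover have "A1 \<inter> A2 \<in> p" using fD(4)[OF pfacts(1)[OF assms(1)]] calculation by blast
  ultimately show ?thesis unfolding tr_def using Cl_props(4)[OF gY] by blast
qed

lemma t_ne: assumes "p \<in> WX" "K \<in> t p" shows "K \<noteq> {}"
proof -
  obtain A where "A \<in> p" "f ` A \<subseteq> K" using assms unfolding tr_def by blast
  moreover have "A \<noteq> {}" using pfacts(4)[OF assms(1)] calculation by blast
  ultimately show ?thesis by blast
qed

lemma t_fin: assumes "p \<in> WX" "finite \<F>" "\<F> \<subseteq> t p" shows "Y \<inter> \<Inter>\<F> \<in> t p"
  using assms(2,3)
proof (induction rule: finite_induct)
  case empty then show ?case using t_Y[OF assms(1)] by simp
next
  case (insert B \<F>)
  have "Y \<inter> \<Inter>(insert B \<F>) = B \<inter> (Y \<inter> \<Inter>\<F>)" by auto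
  then show ?case using insert t_Int[OF assms(1)] by auto
qed

lemma EX: assumes "\<B> \<subseteq> Cl Y OpY" "\<And>\<F>. finite \<F> \<Longrightarrow> \<F> \<subseteq> \<B> \<Longrightarrow> Y \<inter> \<Inter>\<F> \<noteq> {}"
  shows "\<exists>q\<in>WY. \<B> \<subseteq> q"
proof -
  let ?T = "wallman_topology Y OpY"
  define \<C> where "\<C> = insert WY (wallman_bracket Y OpY ` \<B>)"
  have clB: "closedin ?T (wallman_bracket Y OpY B)" if "B \<in> \<B>" for B
  proof -
    have sub: "wallman_bracket Y OpY B \<subseteq> WY" unfolding wallman_bracket_def by blast
    have "B \<in> Cl Y OpY" using that assms(1) by blast
    then have "openin ?T (WY - wallman_bracket Y OpY B)" by (rule open_WT)
    then show ?thesis using sub by (simp add: closedin_def topspace_WT[OF gY])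
  qed
  have cl: "\<forall>C\<in>\<C>. closedin ?T C"
  proof
    fix C assume "C \<in> \<C>"
    then consider "C = WY" | B where "B \<in> \<B>" "C = wallman_bracket Y OpY B" unfolding \<C>_def by blast
    then show "closedin ?T C"
    proof cases
      case 1 then show ?thesis using closedin_topspace[of ?T] topspace_WT[OF gY] by simp
    next
      case 2 then show ?thesis using clB by simp
    qed
  qed
  have fip: "\<forall>\<G>. finite \<G> \<and> \<G> \<subseteq> \<C> \<longrightarrow> \<Inter>\<G> \<noteq> {}"
  proof (intro allI impI)
    fix \<G> assume G: "finite \<G> \<and> \<G> \<subseteq> \<C>"
    have s1: "\<G> - {WY} \<subseteq> wallman_bracket Y OpY ` \<B>" using G \<C>_def by blast
    have s2: "finite (\<G> - {WY})" using G by blast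
    obtain \<F> where F: "\<F> \<subseteq> \<B>" "finite \<F>" "\<G> - {WY} = wallman_bracket Y OpY ` \<F>"
      using finite_subset_image[OF s2 s1] by blast
    have "Y \<inter> \<Inter>\<F> \<noteq> {}" using assms(2)[OF F(2) F(1)] .
    then obtain y where y: "y \<in> Y" "y \<in> \<Inter>\<F>" by blast
    have w: "w_map Y OpY y \<in> WY" using w_map_uf[OF gY nY y(1)] .
    have wB: "w_map Y OpY y \<in> wallman_bracket Y OpY B" if "B \<in> \<F>" for B
    proof -
      have "B \<in> Cl Y OpY" "y \<in> B" using that F(1) assms(1) y(2) by blast+
      then have "B \<in> w_map Y OpY y" unfolding w_map_def by blast
      then show ?thesis using w unfolding wallman_bracket_def by blast
    qed
    have "w_map Y OpY y \<in> G" if "G \<in> \<G>" for G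
    proof (cases "G = WY")
      case True then show ?thesis using w by simp
    next
      case False
      then have "G \<in> wallman_bracket Y OpY ` \<F>" using F(3) that by blast
      then show ?thesis using wB by blast
    qed
    then show "\<Inter>\<G> \<noteq> {}" by blast
  qed
  have "\<Inter>\<C> \<noteq> {}" using cY[unfolded compact_space_fip, rule_format, of \<C>] cl fip by blast
  then obtain q where q: "q \<in> \<Inter>\<C>" by blast
  then have "q \<in> WY" unfolding \<C>_def by blast
  moreover have "B \<in> q" if "B \<in> \<B>" for B
  proof -
    have "q \<in> wallman_bracket Y OpY B" using q that unfolding \<C>_def by blast
    then show ?thesis unfolding wallman_bracket_def by blast
  qed
  ultimately show ?thesis by blast
qed

lemma EXT: assumes p: "p \<in> WX" and B: "B \<in> Cl Y OpY" and H: "\<forall>K\<in>t p. K \<inter> B \<noteq> {}"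
  shows "\<exists>q\<in>WY. t p \<subseteq> q \<and> B \<in> q"
proof -
  have "\<exists>q\<in>WY. insert B (t p) \<subseteq> q"
  proof (rule EX)
    show "insert B (t p) \<subseteq> Cl Y OpY" using B t_sub by blast
  next
    fix \<F> assume F: "finite \<F>" "\<F> \<subseteq> insert B (t p)"
    have F1: "finite (\<F> - {B})" using F(1) by blast
    have F2: "\<F> - {B} \<subseteq> t p" using F(2) by blast
    define K where "K = Y \<inter> \<Inter>(\<F> - {B})"
    have K: "K \<in> t p" unfolding K_def using t_fin[OF p F1 F2] .
    have "K \<inter> B \<noteq> {}" using H K by blast
    moreover have "K \<inter> B \<subseteq> Y \<inter> \<Inter>\<F>" unfolding K_def by blast
    ultimately show "Y \<inter> \<Inter>\<F> \<noteq> {}" by blast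
  qed
  then show ?thesis by blast
qed

lemma UNIQ: assumes p: "p \<in> WX" and q: "q1 \<in> WY" "q2 \<in> WY" "t p \<subseteq> q1" "t p \<subseteq> q2"
  shows "q1 = q2"
proof (rule ccontr)
  assume ne: "q1 \<noteq> q2"
  have u: "ultrafilter_in (Cl Y OpY) q1" "ultrafilter_in (Cl Y OpY) q2" using q unfolding wallman_points_def by auto
  have f: "filter_in (Cl Y OpY) q1" "filter_in (Cl Y OpY) q2" using u uf_filter by auto
  have mx: "\<forall>q. filter_in (Cl Y OpY) q \<and> q1 \<subseteq> q \<longrightarrow> q = q1" using u(1) unfolding ultrafilter_in_def by blast
  have "\<not> q1 \<subseteq> q2"
  proof
    assume "q1 \<subseteq> q2"
    then have "q2 = q1" using mx f(2) by blast
    then show False using ne by simp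
  qed
  then obtain B1 where B1: "B1 \<in> q1" "B1 \<notin> q2" by blast
  have B1C: "B1 \<in> Cl Y OpY" using B1 fD(1)[OF f(1)] by blast
  have "\<exists>C\<in>q2. C \<inter> B1 = {}" using uf_disj[OF u(2) B1C B1(2) Cl_props(4)[OF gY]] .
  then obtain B2 where B2: "B2 \<in> q2" "B2 \<inter> B1 = {}" by blast
  have B2C: "B2 \<in> Cl Y OpY" using B2 fD(1)[OF f(2)] by blast
  have d1: "B1 \<inter> B2 = {}" using B2(2) by blast
  have "\<exists>U\<in>OpY. \<exists>V\<in>OpY. B1 \<subseteq> U \<and> B2 \<subseteq> V \<and> U \<inter> V = {}" using wnY[OF B1C B2C d1] .
  then obtain V1 V2 where V: "V1 \<in> OpY" "V2 \<in> OpY" "B1 \<subseteq> V1" "B2 \<subseteq> V2" "V1 \<inter> V2 = {}" by blast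
  have DC: "Y - V1 \<in> Cl Y OpY" using Cl_props(3)[OF gY V(1)] .
  have d2: "B1 \<inter> (Y - V1) = {}" using V(3) by blast
  have "\<exists>U\<in>OpY. \<exists>V\<in>OpY. B1 \<subseteq> U \<and> Y - V1 \<subseteq> V \<and> U \<inter> V = {}" using wnY[OF B1C DC d2] .
  then obtain G H where GH: "G \<in> OpY" "H \<in> OpY" "B1 \<subseteq> G" "Y - V1 \<subseteq> H" "G \<inter> H = {}" by blast
  have OP: "OpY \<subseteq> Pow Y" by (rule gts_Op(1)[OF gY])
  have Vs: "V1 \<subseteq> Y" "H \<subseteq> Y" "V2 \<subseteq> Y" "G \<subseteq> Y"
    using subsetD[OF OP V(1)] subsetD[OF OP V(2)] subsetD[OF OP GH(1)] subsetD[OF OP GH(2)] by simp_all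
  have c1: "\<Union>{V1, H} = Y" using Vs(1,2) GH(4) by auto
  have c2: "finite {V1, H}" by simp
  have c3: "{V1, H} \<subseteq> OpY" using V(1) GH(2) by blast
  have "\<exists>C\<in>p. \<exists>V\<in>{V1, H}. f ` C \<subseteq> V" using KEY[OF p c2 c3 c1] .
  then obtain C W where C: "C \<in> p" "W \<in> {V1, H}" "f ` C \<subseteq> W" by blast
  have fC: "f ` C \<subseteq> Y" using C(1) pfacts(5)[OF p] fXY by blast
  show False
  proof (cases "W = V1")
    case True
    then have "f ` C \<subseteq> Y - V2" using C fC V(5) by blast
    then have "Y - V2 \<in> t p" unfolding tr_def using C(1) Cl_props(3)[OF gY V(2)] by blast
    then have "Y - V2 \<in> q2" using q(4) by blast
    then have "(Y - V2) \<inter> B2 \<in> q2" using fD(4)[OF f(2)] B2 by blast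
    moreover have "(Y - V2) \<inter> B2 = {}" using V by blast
    ultimately show False using fD(2)[OF f(2)] by auto
  next
    case False
    then have "f ` C \<subseteq> Y - G" using C fC GH(5) by blast
    then have "Y - G \<in> t p" unfolding tr_def using C(1) Cl_props(3)[OF gY GH(1)] by blast
    then have "Y - G \<in> q1" using q(3) by blast
    then have "(Y - G) \<inter> B1 \<in> q1" using fD(4)[OF f(1)] B1 by blast
    moreover have "(Y - G) \<inter> B1 = {}" using GH by blast
    ultimately show False using fD(2)[OF f(1)] by auto
  qed
qed

end


context suffctx begin

lemma suff: "\<exists>F. weakly_continuous_wallman_extension X OpX Y OpY f F"
proof -
  define F where "F p = (SOME q. q \<in> WY \<and> t p \<subseteq> q)" for p
  have Fp: "F p \<in> WY \<and> t p \<subseteq> F p" if p: "p \<in> WX" for p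
  proof -
    have "\<forall>K\<in>t p. K \<inter> Y \<noteq> {}"
    proof
      fix K assume K: "K \<in> t p"
      have "K \<subseteq> Y" using K t_sub Cl_props(6)[OF gY] by blast
      moreover have "K \<noteq> {}" using t_ne[OF p K] .
      ultimately show "K \<inter> Y \<noteq> {}" by blast
    qed
    then have "\<exists>q\<in>WY. t p \<subseteq> q \<and> Y \<in> q" using EXT[OF p Cl_props(2)[OF gY]] by blast
    then have "\<exists>q. q \<in> WY \<and> t p \<subseteq> q" by blast
    then show ?thesis unfolding F_def by (rule someI_ex)
  qed
  have Fchar: "\<exists>K\<in>t p. K \<inter> B = {}" if p: "p \<in> WX" and B: "B \<in> Cl Y OpY" "B \<notin> F p" for p B
  proof (rule ccontr)
    assume "\<not> (\<exists>K\<in>t p. K \<inter> B = {})"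
    then have "\<forall>K\<in>t p. K \<inter> B \<noteq> {}" by blast
    then obtain q where q: "q \<in> WY" "t p \<subseteq> q" "B \<in> q" using EXT[OF p B(1)] by blast
    have "q = F p" using UNIQ[OF p q(1) conjunct1[OF Fp[OF p]] q(2) conjunct2[OF Fp[OF p]]] .
    then show False using q(3) B(2) by simp
  qed
  have ext: "wallman_extension X OpX Y OpY f F"
    unfolding wallman_extension_def
  proof (intro conjI ballI)
    fix p assume "p \<in> WX" then show "F p \<in> WY" using Fp by blast
  next
    fix x assume x: "x \<in> X"
    have w: "w_map X OpX x \<in> WX" using w_map_uf[OF gX nX x] .
    have fx: "f x \<in> Y" using fXY x by blast
    have wy: "w_map Y OpY (f x) \<in> WY" using w_map_uf[OF gY nY fx] .
    have sub: "t (w_map X OpX x) \<subseteq> w_map Y OpY (f x)"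
    proof
      fix K assume "K \<in> t (w_map X OpX x)"
      then obtain A where A: "K \<in> Cl Y OpY" "A \<in> w_map X OpX x" "f ` A \<subseteq> K" unfolding tr_def by blast
      then have "x \<in> A" unfolding w_map_def by blast
      then have "f x \<in> K" using A(3) by blast
      then show "K \<in> w_map Y OpY (f x)" using A(1) unfolding w_map_def by blast
    qed
    show "F (w_map X OpX x) = w_map Y OpY (f x)"
      using UNIQ[OF w conjunct1[OF Fp[OF w]] wy conjunct2[OF Fp[OF w]] sub] .
  qed
  have SU: "\<Union>{WY - wallman_bracket Y OpY A | A. A \<in> Cl Y OpY} = WY"
    using topspace_WT[OF gY] unfolding wallman_topology_def by simp
  have opn: "openin (wallman_topology X OpX) (F -` (WY - wallman_bracket Y OpY B) \<inter> WX)"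
    if B: "B \<in> Cl Y OpY" for B
    unfolding openin_subopen[of _ "F -` (WY - wallman_bracket Y OpY B) \<inter> WX"]
  proof
    fix p assume pin: "p \<in> F -` (WY - wallman_bracket Y OpY B) \<inter> WX"
    then have p: "p \<in> WX" and Bp: "B \<notin> F p" unfolding wallman_bracket_def by auto
    have up: "ultrafilter_in (Cl X OpX) p" using pfacts(2)[OF p] .
    obtain K where K: "K \<in> t p" "K \<inter> B = {}" using Fchar[OF p B Bp] by blast
    obtain A where A: "K \<in> Cl Y OpY" "A \<in> p" "f ` A \<subseteq> K" using K(1) unfolding tr_def by blast
    have "\<exists>U\<in>OpY. \<exists>V\<in>OpY. K \<subseteq> U \<and> B \<subseteq> V \<and> U \<inter> V = {}" using wnY[OF A(1) B K(2)] .
    then obtain OK OB where O: "OK \<in> OpY" "OB \<in> OpY" "K \<subseteq> OK" "B \<subseteq> OB" "OK \<inter> OB = {}" by blast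
    have OP: "OpY \<subseteq> Pow Y" by (rule gts_Op(1)[OF gY])
    have OKY: "OK \<subseteq> Y" using subsetD[OF OP O(1)] by simp
    have KY: "K \<subseteq> Y" using Cl_props(6)[OF gY A(1)] .
    have YK: "Y - K \<in> OpY" using Cl_iff[OF gY] A(1) by blast
    have v1: "finite {OK, Y - K}" by simp
    have v2: "{OK, Y - K} \<subseteq> OpY" using O(1) YK by blast
    have v3: "\<Union>{OK, Y - K} = Y" using OKY O(3) by auto
    obtain \<U> where U: "finite \<U>" "\<U> \<subseteq> OpX" "\<Union>\<U> = X"
      "fam_refines \<U> ((\<lambda>V. {x \<in> X. f x \<in> V}) ` {OK, Y - K})"
      using wc v1 v2 v3 unfolding w_continuous_def by blast
    have ref: "\<forall>U\<in>\<U>. \<exists>V\<in>{OK, Y - K}. U \<subseteq> {x \<in> X. f x \<in> V}"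
      using U(4) unfolding fam_refines_def by blast
    define U2 where "U2 = \<Union>{U \<in> \<U>. U \<subseteq> {x \<in> X. f x \<in> OK}}"
    have u1: "finite {U \<in> \<U>. U \<subseteq> {x \<in> X. f x \<in> OK}}" using U(1) by simp
    have u2: "{U \<in> \<U>. U \<subseteq> {x \<in> X. f x \<in> OK}} \<subseteq> OpX" using U(2) by blast
    have U2op: "U2 \<in> OpX" unfolding U2_def using Op_Union[OF gX u1 u2] .
    define A0 where "A0 = X - U2"
    have A0C: "A0 \<in> Cl X OpX" unfolding A0_def using Cl_props(3)[OF gX U2op] .
    have AX: "A \<subseteq> X" using pfacts(5)[OF p A(2)] .
    have AU2: "A \<subseteq> U2"
    proof
      fix x assume xA: "x \<in> A"
      then have xX: "x \<in> X" using AX by blast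
      then obtain U where U': "U \<in> \<U>" "x \<in> U" using U(3) by blast
      then obtain V where V: "V \<in> {OK, Y - K}" "U \<subseteq> {x \<in> X. f x \<in> V}" using ref by blast
      have fxK: "f x \<in> K" using xA A(3) by blast
      have "V = OK"
      proof (rule ccontr)
        assume "V \<noteq> OK"
        then have "V = Y - K" using V(1) by blast
        then show False using V(2) U'(2) fxK by blast
      qed
      then show "x \<in> U2" unfolding U2_def using U' V(2) by blast
    qed
    have "A0 \<notin> p"
    proof
      assume "A0 \<in> p"
      then have "A \<inter> A0 \<in> p" using fD(4)[OF pfacts(1)[OF p] A(2)] by blast
      moreover have "A \<inter> A0 = {}" unfolding A0_def using AU2 by blast
      ultimately show False using pfacts(4)[OF p] by simp
    qed
    define T where "T = WX - wallman_bracket X OpX A0"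
    have "openin (wallman_topology X OpX) T" unfolding T_def using open_WT[OF A0C] .
    moreover have "p \<in> T" unfolding T_def wallman_bracket_def using p \<open>A0 \<notin> p\<close> by blast
    moreover have "T \<subseteq> F -` (WY - wallman_bracket Y OpY B) \<inter> WX"
    proof
      fix p' assume "p' \<in> T"
      then have p': "p' \<in> WX" "A0 \<notin> p'" unfolding T_def wallman_bracket_def by blast+
      have "\<exists>C\<in>p'. C \<inter> A0 = {}"
        using uf_disj[OF pfacts(2)[OF p'(1)] A0C p'(2) Cl_props(4)[OF gX]] .
      then obtain A' where A': "A' \<in> p'" "A' \<inter> A0 = {}" by blast
      have "A' \<subseteq> X" using pfacts(5)[OF p'(1) A'(1)] .
      then have "A' \<subseteq> U2" using A'(2) unfolding A0_def by blast
      then have "f ` A' \<subseteq> OK" unfolding U2_def by blast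
      then have fA': "f ` A' \<subseteq> Y - OB" using OKY O(5) by blast
      have GC: "Y - OB \<in> Cl Y OpY" using Cl_props(3)[OF gY O(2)] .
      have "Y - OB \<in> t p'" unfolding tr_def using GC A'(1) fA' by blast
      then have G: "Y - OB \<in> F p'" using Fp[OF p'(1)] by blast
      have fq: "filter_in (Cl Y OpY) (F p')"
        using uf_filter conjunct1[OF Fp[OF p'(1)]] unfolding wallman_points_def by blast
      have "B \<notin> F p'"
      proof
        assume "B \<in> F p'"
        then have "(Y - OB) \<inter> B \<in> F p'" using fD(4)[OF fq G] by blast
        moreover have "(Y - OB) \<inter> B = {}" using O(4) by blast
        ultimately show False using fD(2)[OF fq] by simp
      qed
      then show "p' \<in> F -` (WY - wallman_bracket Y OpY B) \<inter> WX"
        using conjunct1[OF Fp[OF p'(1)]] p'(1) unfolding wallman_bracket_def by blast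
    qed
    ultimately show "\<exists>T. openin (wallman_topology X OpX) T \<and> p \<in> T \<and> T \<subseteq> F -` (WY - wallman_bracket Y OpY B) \<inter> WX"
      by blast
  qed
  have cont: "continuous_map (wallman_topology X OpX) (wallman_topology Y OpY) F"
    unfolding wallman_topology_def[of Y OpY]
  proof (rule continuous_on_generated_topo)
    fix U assume "U \<in> {WY - wallman_bracket Y OpY A | A. A \<in> Cl Y OpY}"
    then obtain B where B: "B \<in> Cl Y OpY" "U = WY - wallman_bracket Y OpY B" by blast
    show "openin (wallman_topology X OpX) (F -` U \<inter> topspace (wallman_topology X OpX))"
      using opn[OF B(1)] B(2) topspace_WT[OF gX] by simp
  next
    show "F ` topspace (wallman_topology X OpX) \<subseteq> \<Union>{WY - wallman_bracket Y OpY A | A. A \<in> Cl Y OpY}"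
      using SU topspace_WT[OF gX] Fp by auto
  qed
  show ?thesis unfolding weakly_continuous_wallman_extension_def using ext cont by blast
qed

end

theorem theorem8p10:
  fixes X :: "'a set" and OpX :: "'a set set" and CovX :: "'a set set set"
    and Y :: "'b set" and OpY :: "'b set set" and CovY :: "'b set set set"
    and f :: "'a \<Rightarrow> 'b"
  assumes "gts X OpX CovX" and "gts Y OpY CovY"
    and "weakly_normal X OpX" and "weakly_normal Y OpY"
    and "compact_space (wallman_topology X OpX)"
    and "compact_space (wallman_topology Y OpY)"
    and "\<forall>x\<in>X. f x \<in> Y"
  shows "(\<exists>F. weakly_continuous_wallman_extension X OpX Y OpY f F) \<longleftrightarrow> w_continuous X OpX Y OpY f"
proof
  assume "\<exists>F. weakly_continuous_wallman_extension X OpX Y OpY f F"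
  then obtain F where "weakly_continuous_wallman_extension X OpX Y OpY f F" by blast
  then show "w_continuous X OpX Y OpY f" using nec[OF assms(1,2,3,4,5,7)] by blast
next
  assume wc: "w_continuous X OpX Y OpY f"
  interpret suffctx X OpX CovX Y OpY CovY f
    using assms wc by (unfold_locales) auto
  show "\<exists>F. weakly_continuous_wallman_extension X OpX Y OpY f F" by (rule suff)
qed

end
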